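(* Consider a classical elementary system with timelike four-momentum and non-zero spin, in explicit form (ii). Let $\mathbf A\colon\Gamma\to\mathbb R^3$ be $C^1$, invariant under spatial translations ($\{P_a,A_b\}=0$), transforming as a vector under spatial rotations ($\{J_{ab},A_c\}=\delta_{ac}A_b-\delta_{bc}A_a$), and satisfying $\mathbf A\cdot\mathbf P=0$. Then on $\Gamma^*\setminus\{\mathbf s\parallel\hat{\mathbf P}\}$ one has $$\mathbf A=B\,\hat{\mathbf P}\times\mathbf s+C\,\hat{\mathbf P}\times(\hat{\mathbf P}\times\mathbf s),$$ where $B=B(|\mathbf P|,\hat{\mathbf P}\cdot\mathbf s)$ and $C=C(|\mathbf P|,\hat{\mathbf P}\cdot\mathbf s)$ for $C^1$ functions $B,C\colon\mathbb R_+\times(-S,S)\to\mathbb R$.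
   Context: Fix a positively oriented orthonormal basis $\{e_0,\dots,e_3\}$ of Minkowski space (signature $(-,+,+,+)$), speed of light $c>0$, $m>0$, $S>0$. Spatial indices raised/lowered with Kronecker delta; ${}^{(3)}\varepsilon_{abc}$ Levi-Civita symbol; $\mathbf A\cdot\mathbf B=A_aB^a$, $(\mathbf A\times\mathbf B)_a={}^{(3)}\varepsilon_{abc}A^bB^c$. Poisson bracket: $\omega(X_f,\cdot)=df$, $\{f,g\}=\omega(X_f,X_g)$. Form (ii): $\Gamma=T^*\mathbb R^3\times\mathsf S^2\ni(\mathbf x,\mathbf p,\hat{\mathbf s})$, $\omega=dx^a\wedge dp_a+S\,d\Omega^2$; $\mathbf s=S\hat{\mathbf s}$, $\{s_a,s_b\}={}^{(3)}\varepsilon_{abc}s^c$, $\mathbf s$ Poisson-commuting with $\mathbf x,\mathbf p$; $P_a=p_a$, $P_0=-\sqrt{m^2c^2+\mathbf p^2}$, $J_{ab}=x_ap_b-x_bp_a+{}^{(3)}\varepsilon_{abc}s^c$, $J_{a0}=P_0x_a-\frac{(\mathbf p\times\mathbf s)_a}{mc-P_0}$. $\Gamma^*=\Gamma\setminus\{|\mathbf P|=0\}$, $\hat{\mathbf P}=\mathbf P/|\mathbf P|$; $\{\mathbf s\parallel\hat{\mathbf P}\}$ is the set where $\mathbf s$ is parallel or antiparallel to $\hat{\mathbf P}$. *)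

theory Defs
  imports "HOL-Analysis.Analysis"
begin

text \<open>Functions on Gamma are modelled as functions on the ambient space
  R^3 x R^3 x R^3; only their values / derivatives at points of Gamma enter.\<close>

type_synonym state = "(real^3) \<times> (real^3) \<times> (real^3)"

definition pos :: "state \<Rightarrow> real^3" where "pos z = fst z"
definition mom :: "state \<Rightarrow> real^3" where "mom z = fst (snd z)"
definition spin :: "state \<Rightarrow> real^3" where "spin z = snd (snd z)"

definition Gamma :: "real \<Rightarrow> state set" where
  "Gamma S = {z. norm (spin z) = S}"

text \<open>C^1 on an open set U (derivative continuous, checked on each direction; finite dimension).\<close>
definition C1_on :: "'a::euclidean_space set \<Rightarrow> ('a \<Rightarrow> 'b::euclidean_space) \<Rightarrow> bool" where
  "C1_on U f \<longleftrightarrow> (\<exists>f'. (\<forall>z\<in>U. (f has_derivative f' z) (at z)) \<and>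
                      (\<forall>v. continuous_on U (\<lambda>z. f' z v)))"

definition C1_on_Gamma :: "real \<Rightarrow> (state \<Rightarrow> real^3) \<Rightarrow> bool" where
  "C1_on_Gamma S A \<longleftrightarrow> (\<exists>U. open U \<and> Gamma S \<subseteq> U \<and> C1_on U A)"

definition eps :: "3 \<Rightarrow> 3 \<Rightarrow> 3 \<Rightarrow> real" where
  "eps a b c = (cross3 (axis b 1) (axis c 1)) $ a"

definition dx :: "(state \<Rightarrow> real) \<Rightarrow> state \<Rightarrow> 3 \<Rightarrow> real" where
  "dx f z a = frechet_derivative f (at z) (axis a 1, 0, 0)"
definition dp :: "(state \<Rightarrow> real) \<Rightarrow> state \<Rightarrow> 3 \<Rightarrow> real" where
  "dp f z a = frechet_derivative f (at z) (0, axis a 1, 0)"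
definition grad_s :: "(state \<Rightarrow> real) \<Rightarrow> state \<Rightarrow> real^3" where
  "grad_s f z = (\<chi> a. frechet_derivative f (at z) (0, 0, axis a 1))"

text \<open>Poisson bracket of omega = dx^a/\dp_a + S dOmega^2 with omega(X_f,.) = df,
  {f,g} = omega(X_f,X_g): gives {x_a,p_b} = delta_ab, {s_a,s_b} = eps_abc s^c.  The spin part
  s.(grad f x grad g) only depends on tangential derivatives, hence on f, g restricted to Gamma.\<close>
definition pbr :: "(state \<Rightarrow> real) \<Rightarrow> (state \<Rightarrow> real) \<Rightarrow> state \<Rightarrow> real" where
  "pbr f g z = (\<Sum>a\<in>UNIV. dx f z a * dp g z a - dp f z a * dx g z a)
              + spin z \<bullet> cross3 (grad_s f z) (grad_s g z)"

definition Pcomp :: "3 \<Rightarrow> state \<Rightarrow> real" where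
  "Pcomp a z = mom z $ a"

definition Jcomp :: "3 \<Rightarrow> 3 \<Rightarrow> state \<Rightarrow> real" where
  "Jcomp a b z = pos z $ a * mom z $ b - pos z $ b * mom z $ a
                 + (\<Sum>c\<in>UNIV. eps a b c * spin z $ c)"

definition kdelta :: "3 \<Rightarrow> 3 \<Rightarrow> real" where
  "kdelta a b = (if a = b then 1 else 0)"

definition spin_parallel :: "state \<Rightarrow> bool" where
  "spin_parallel z \<longleftrightarrow> (\<exists>t::real. spin z = t *\<^sub>R (mom z /\<^sub>R norm (mom z)))"

end

theory Submission
  imports Defs
begin

lemma C1_lin: "bounded_linear f \<Longrightarrow> C1_on U f"
  unfolding C1_on_def
  by (rule exI[of _ "\<lambda>z. f"]) (auto intro: bounded_linear_imp_has_derivative)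

lemma bl_expand:
  fixes L :: "'a::euclidean_space \<Rightarrow> 'b::real_normed_vector"
  assumes "bounded_linear L"
  shows "L y = (\<Sum>i\<in>Basis. (y \<bullet> i) *\<^sub>R L i)"
proof -
  have "L y = L (\<Sum>i\<in>Basis. (y \<bullet> i) *\<^sub>R i)" by (simp add: euclidean_representation)
  also have "\<dots> = (\<Sum>i\<in>Basis. (y \<bullet> i) *\<^sub>R L i)"
    using assms by (simp add: linear_sum linear_scale bounded_linear.linear)
  finally show ?thesis .
qed

lemma C1_comp:
  fixes f :: "'b::euclidean_space \<Rightarrow> 'c::euclidean_space" and h :: "'a::euclidean_space \<Rightarrow> 'b"
  assumes f: "C1_on U f" and h: "C1_on V h" and sub: "h ` V \<subseteq> U"
  shows "C1_on V (\<lambda>z. f (h z))"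
proof -
  obtain f' where f1: "\<forall>z\<in>U. (f has_derivative f' z) (at z)" and f2: "\<forall>v. continuous_on U (\<lambda>z. f' z v)"
    using f unfolding C1_on_def by blast
  obtain h' where h1: "\<forall>z\<in>V. (h has_derivative h' z) (at z)" and h2: "\<forall>v. continuous_on V (\<lambda>z. h' z v)"
    using h unfolding C1_on_def by blast
  have hc: "continuous_on V h"
    using h1 by (meson continuous_at_imp_continuous_on has_derivative_continuous)
  have d: "((\<lambda>z. f (h z)) has_derivative (\<lambda>v. f' (h z) (h' z v))) (at z)" if "z \<in> V" for z
  proof -
    have "(f has_derivative f' (h z)) (at (h z))" using f1 sub that by blast
    from diff_chain_at[OF h1[rule_format, OF that] this] show ?thesis by (simp add: o_def)
  qed
  have bl: "bounded_linear (f' (h z))" if "z \<in> V" for z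
    using f1 sub that by (blast intro: has_derivative_bounded_linear)
  have c: "continuous_on V (\<lambda>z. f' (h z) (h' z v))" for v
  proof -
    have eq: "\<forall>z\<in>V. f' (h z) (h' z v) = (\<Sum>i\<in>Basis. (h' z v \<bullet> i) *\<^sub>R f' (h z) i)"
      using bl bl_expand by blast
    have "continuous_on V (\<lambda>z. \<Sum>i\<in>Basis. (h' z v \<bullet> i) *\<^sub>R f' (h z) i)"
    proof (intro continuous_on_sum continuous_on_scaleR continuous_on_inner continuous_on_const)
      fix i show "continuous_on V (\<lambda>z. h' z v)" using h2 by blast
      show "continuous_on V (\<lambda>z. f' (h z) i)"
        using continuous_on_compose2[OF f2[rule_format, of i] hc sub] .
    qed
    then show ?thesis using continuous_on_cong[OF refl, of V] eq by (smt (verit))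
  qed
  show ?thesis unfolding C1_on_def
    by (rule exI[of _ "\<lambda>z v. f' (h z) (h' z v)"]) (use d c in auto)
qed

lemma C1_pair:
  assumes f: "C1_on V f" and h: "C1_on V h"
  shows "C1_on V (\<lambda>z. (f z, h z))"
proof -
  obtain f' where f1: "\<forall>z\<in>V. (f has_derivative f' z) (at z)" and f2: "\<forall>v. continuous_on V (\<lambda>z. f' z v)"
    using f unfolding C1_on_def by blast
  obtain h' where h1: "\<forall>z\<in>V. (h has_derivative h' z) (at z)" and h2: "\<forall>v. continuous_on V (\<lambda>z. h' z v)"
    using h unfolding C1_on_def by blast
  show ?thesis unfolding C1_on_def
    by (rule exI[of _ "\<lambda>z v. (f' z v, h' z v)"])
       (use f1 f2 h1 h2 in \<open>auto intro!: has_derivative_Pair continuous_on_Pair\<close>)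
qed

lemma C1_mult: "C1_on UNIV (\<lambda>q::real\<times>real. fst q * snd q)"
  unfolding C1_on_def
  apply (rule exI[of _ "\<lambda>q v. fst q * snd v + fst v * snd q"])
  apply (auto intro!: derivative_eq_intros continuous_intros)
  done

lemma C1_real:
  fixes f :: "real \<Rightarrow> real"
  assumes "\<forall>x\<in>U. (f has_real_derivative f' x) (at x)" "continuous_on U f'"
  shows "C1_on U f"
  unfolding C1_on_def
  apply (rule exI[of _ "\<lambda>x v. f' x * v"])
  using assms by (auto simp: has_field_derivative_def intro!: continuous_intros)

lemma quad_id: "c\<^sup>2 + s\<^sup>2 = 1 \<Longrightarrow> (c*x1 + s*x2)*(c*y2 - s*y1) - (c*x2 - s*x1)*(c*y1 + s*y2) = x1*y2 - x2*y1"
  for c s x1 x2 y1 y2 :: real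
  by algebra

lemma quad_id2: "c\<^sup>2 + s\<^sup>2 = 1 \<Longrightarrow> (c*x1 + s*x2)*(c*y1 + s*y2) + (c*x2 - s*x1)*(c*y2 - s*y1) + z = x1*y1 + x2*y2 + z"
  for c s x1 x2 y1 y2 z :: real
  by algebra

lemma quad_id3: "c\<^sup>2 + s\<^sup>2 = 1 \<Longrightarrow> c*(c*x1 - s*x2) + s*(c*x2 + s*x1) = x1"
  "c\<^sup>2 + s\<^sup>2 = 1 \<Longrightarrow> c*(c*x2 + s*x1) - s*(c*x1 - s*x2) = x2"
  for c s x1 x2 :: real
  by algebra+

definition Jv :: "3 \<Rightarrow> 3 \<Rightarrow> real^3 \<Rightarrow> real^3" where
  "Jv a b v = v$b *\<^sub>R axis a 1 - v$a *\<^sub>R axis b 1"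

definition rot :: "3 \<Rightarrow> 3 \<Rightarrow> real \<Rightarrow> real^3 \<Rightarrow> real^3" where
  "rot a b t v = v + (cos t - 1) *\<^sub>R (v$a *\<^sub>R axis a 1 + v$b *\<^sub>R axis b 1) + sin t *\<^sub>R Jv a b v"

lemma rot_nth: "a \<noteq> b \<Longrightarrow> rot a b t v $ i =
   (if i = a then cos t * v$a + sin t * v$b else if i = b then cos t * v$b - sin t * v$a else v$i)"
  by (auto simp: rot_def Jv_def axis_def algebra_simps)

lemma Jv_nth: "a \<noteq> b \<Longrightarrow> Jv a b v $ i = (if i = a then v$b else if i = b then - v$a else 0)"
  by (auto simp: Jv_def axis_def)

lemma rot_0[simp]: "rot a b 0 v = v"
  by (simp add: rot_def)

lemma rot_add: "a \<noteq> b \<Longrightarrow> rot a b t (u + v) = rot a b t u + rot a b t v"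
  by (simp add: vec_eq_iff rot_nth algebra_simps)

lemma rot_scaleR: "a \<noteq> b \<Longrightarrow> rot a b t (c *\<^sub>R v) = c *\<^sub>R rot a b t v"
  by (simp add: vec_eq_iff rot_nth algebra_simps)

lemma rot_inv: "a \<noteq> b \<Longrightarrow> rot a b t (rot a b (-t) w) = w"
proof -
  assume ab: "a \<noteq> b"
  have sc: "(cos t)\<^sup>2 + (sin t)\<^sup>2 = 1" by simp
  show ?thesis unfolding vec_eq_iff
  proof
    fix i show "rot a b t (rot a b (-t) w) $ i = w $ i"
      using ab by (simp add: rot_nth quad_id3[OF sc])
  qed
qed

lemma ex3: "(a::3) \<noteq> b \<Longrightarrow> \<exists>k. k \<noteq> a \<and> k \<noteq> b \<and> (\<forall>i. i = a \<or> i = b \<or> i = k)"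
proof -
  assume ab: "a \<noteq> b"
  let ?k = "(if a \<noteq> 1 \<and> b \<noteq> 1 then 1 else if a \<noteq> 2 \<and> b \<noteq> 2 then 2 else 3::3)"
  have d: "(1::3) \<noteq> 2" "(1::3) \<noteq> 3" "(2::3) \<noteq> 3" by simp_all
  show ?thesis
    apply (rule exI[of _ ?k])
    using exhaust_3[of a] exhaust_3[of b] ab d by (auto simp: forall_3)
qed
lemma sum3_split:
  fixes f :: "3 \<Rightarrow> real"
  assumes "a \<noteq> b" "k \<noteq> a" "k \<noteq> b" "\<forall>i. i = a \<or> i = b \<or> i = k"
  shows "sum f UNIV = f a + f b + f k"
proof -
  have u: "UNIV = {a,b,k}" using assms(4) by auto
  show ?thesis unfolding u using assms(1-3) by (simp add: algebra_simps)
qed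
lemma rot_inner: "a \<noteq> b \<Longrightarrow> rot a b t u \<bullet> rot a b t w = u \<bullet> w"
proof -
  assume ab: "a \<noteq> b"
  have sc: "(cos t)\<^sup>2 + (sin t)\<^sup>2 = 1" by simp
  obtain k where k: "k \<noteq> a" "k \<noteq> b" "\<forall>i. i = a \<or> i = b \<or> i = k"
    using ex3[OF ab] by blast
  note ss = sum3_split[OF ab k]
  show ?thesis unfolding inner_vec_def inner_real_def ss
    using ab k by (simp add: rot_nth quad_id2[OF sc])
qed

lemma rot_norm: "a \<noteq> b \<Longrightarrow> norm (rot a b t u) = norm u"
  by (simp add: norm_eq_sqrt_inner rot_inner)

lemma Jv_antisym: "a \<noteq> b \<Longrightarrow> Jv a b v \<bullet> w + v \<bullet> Jv a b w = 0"
  by (simp add: Jv_def inner_diff_left inner_diff_right inner_axis inner_axis' algebra_simps)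

lemma rot_cross12: "cross3 (rot 1 2 t u) (rot 1 2 t v) = rot 1 2 t (cross3 u v)"
proof -
  have sc: "(cos t)\<^sup>2 + (sin t)\<^sup>2 = 1" by simp
  show ?thesis
    by (simp add: vec_eq_iff forall_3 rot_nth cross3_def quad_id[OF sc]) (simp add: algebra_simps)
qed

lemma rot_cross23: "cross3 (rot 2 3 t u) (rot 2 3 t v) = rot 2 3 t (cross3 u v)"
proof -
  have sc: "(cos t)\<^sup>2 + (sin t)\<^sup>2 = 1" by simp
  show ?thesis
    by (simp add: vec_eq_iff forall_3 rot_nth cross3_def quad_id[OF sc]) (simp add: algebra_simps)
qed

lemma hd_lin1[derivative_intros]: "((\<lambda>x::state. fst x $ a) has_derivative (\<lambda>x. fst x $ a)) F"
  by (rule bounded_linear_imp_has_derivative, rule bounded_linear_compose[OF bounded_linear_vec_nth bounded_linear_fst])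
lemma hd_lin2[derivative_intros]: "((\<lambda>x::state. fst (snd x) $ a) has_derivative (\<lambda>x. fst (snd x) $ a)) F"
  by (rule bounded_linear_imp_has_derivative, rule bounded_linear_compose[OF bounded_linear_vec_nth bounded_linear_compose[OF bounded_linear_fst bounded_linear_snd]])
lemma hd_lin3[derivative_intros]: "((\<lambda>x::state. snd (snd x) $ a) has_derivative (\<lambda>x. snd (snd x) $ a)) F"
  by (rule bounded_linear_imp_has_derivative, rule bounded_linear_compose[OF bounded_linear_vec_nth bounded_linear_compose[OF bounded_linear_snd bounded_linear_snd]])

lemma fd_comp:
  assumes "(A has_derivative A'z) (at z)"
  shows "frechet_derivative (\<lambda>w. A w $ c) (at z) = (\<lambda>v. A'z v $ c)"
proof -
  have "((\<lambda>w. A w $ c) has_derivative (\<lambda>v. A'z v $ c)) (at z)"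
    using bounded_linear.has_derivative[OF bounded_linear_vec_nth assms] .
  then show ?thesis by (rule frechet_derivative_at[symmetric])
qed

lemma fd_P: "frechet_derivative (Pcomp a) (at z) = (\<lambda>v. fst (snd v) $ a)"
proof -
  have "(Pcomp a has_derivative (\<lambda>v. fst (snd v) $ a)) (at z)"
    unfolding Pcomp_def mom_def
    by (auto intro!: derivative_eq_intros)
  then show ?thesis by (rule frechet_derivative_at[symmetric])
qed

lemma fd_J: "frechet_derivative (Jcomp a b) (at z) = (\<lambda>v. fst v $a * mom z $ b + pos z $ a * fst (snd v) $ b
   - (fst v $ b * mom z $ a + pos z $ b * fst (snd v) $ a) + (\<Sum>c\<in>UNIV. eps a b c * snd (snd v) $ c))"
proof -
  have "(Jcomp a b has_derivative (\<lambda>v. fst v $a * mom z $ b + pos z $ a * fst (snd v) $ b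
   - (fst v $ b * mom z $ a + pos z $ b * fst (snd v) $ a) + (\<Sum>c\<in>UNIV. eps a b c * snd (snd v) $ c))) (at z)"
    unfolding Jcomp_def mom_def pos_def spin_def
    by (auto intro!: derivative_eq_intros simp: algebra_simps)
  then show ?thesis by (rule frechet_derivative_at[symmetric])
qed

lemma sum_axis: "(\<Sum>d\<in>UNIV. axis d 1 $ a * (f d::real)) = f a"
proof -
  have "(\<lambda>d. axis d 1 $ a * f d) = (\<lambda>d. if d = a then f a else 0)" by (auto simp: axis_def)
  then show ?thesis by (simp only:) simp
qed

lemma trans_deriv0:
  assumes dA: "(A has_derivative A'z) (at z)"
    and tr: "\<forall>a b. pbr (Pcomp a) (\<lambda>w. A w $ b) z = 0"
  shows "A'z (v, 0, 0) = 0"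
proof -
  have bl: "bounded_linear A'z" using dA by (rule has_derivative_bounded_linear)
  have e: "A'z (axis a 1, 0, 0) $ b = 0" for a b
  proof -
    have g0: "grad_s (Pcomp a) z = 0"
      by (simp add: grad_s_def fd_P vec_eq_iff)
    have "pbr (Pcomp a) (\<lambda>w. A w $ b) z = - A'z (axis a 1, 0, 0) $ b"
      unfolding pbr_def g0 dx_def dp_def fd_P fd_comp[OF dA]
      by (simp add: sum_axis sum_negf)
    then show ?thesis using tr by simp
  qed
  have bl2: "bounded_linear (\<lambda>v. A'z (v, 0::real^3, 0::real^3))"
    using bounded_linear_compose[OF bl, of "\<lambda>v. (v, 0::real^3, 0::real^3)"]
    by (simp add: bounded_linear_Pair bounded_linear_ident bounded_linear_zero)
  have "A'z (v, 0, 0) = (\<Sum>i\<in>Basis. (v \<bullet> i) *\<^sub>R A'z (i, 0, 0))"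
    using bl_expand[OF bl2] .
  also have "\<dots> = 0"
  proof (rule sum.neutral, rule ballI)
    fix i :: "real^3" assume "i \<in> Basis"
    then obtain j where "i = axis j 1" by (auto simp: Basis_vec_def)
    then show "(v \<bullet> i) *\<^sub>R A'z (i, 0, 0) = 0" by (simp only:) (simp add: vec_eq_iff e)
  qed
  finally show ?thesis .
qed

lemma triple_id: "s \<bullet> cross3 (cross3 x y) g = (s \<bullet> y) * (g \<bullet> x) - (s \<bullet> x) * (g \<bullet> y)"
  by (simp add: cross3_simps)

lemma sum_axis2: "(\<Sum>d\<in>UNIV. (axis d 1 $ a * \<alpha> - axis d 1 $ b * \<beta>) * (X d::real)) = \<alpha> * X a - \<beta> * X b"
proof -
  have "(\<Sum>d\<in>UNIV. (axis d 1 $ a * \<alpha> - axis d 1 $ b * \<beta>) * X d)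
      = (\<Sum>d\<in>UNIV. axis d 1 $ a * (\<alpha> * X d)) - (\<Sum>d\<in>UNIV. axis d 1 $ b * (\<beta> * X d))"
    by (simp add: sum_subtractf[symmetric] algebra_simps)
  then show ?thesis by (simp only: sum_axis)
qed

lemma eps_cyc: "cross3 (axis b 1) (axis c 1) $ a = cross3 (axis a 1) (axis b 1) $ (c::3)"
  using exhaust_3[of a] exhaust_3[of b] exhaust_3[of c]
  by (elim disjE) (simp_all add: cross3_def axis_def)

lemma rot_deriv_key:
  assumes dA: "(A has_derivative A'z) (at z)"
    and dx0: "\<forall>v. A'z (v,0,0) = 0"
    and rc: "\<forall>c. pbr (Jcomp a b) (\<lambda>w. A w $ c) z = kdelta a c * A z $ b - kdelta b c * A z $ a"
  shows "A'z (0, Jv a b (mom z), Jv a b (spin z)) = Jv a b (A z)"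
proof -
  have bl: "bounded_linear A'z" using dA by (rule has_derivative_bounded_linear)
  interpret L: bounded_linear A'z by (rule bl)
  define p where "p = mom z"
  define s where "s = spin z"
  have lin: "A'z (0, Jv a b p, Jv a b s) = p$b *\<^sub>R A'z (0, axis a 1, 0) - p$a *\<^sub>R A'z (0, axis b 1, 0)
      + (s$b *\<^sub>R A'z (0, 0, axis a 1) - s$a *\<^sub>R A'z (0, 0, axis b 1))"
  proof -
    have "(0::real^3, Jv a b p, Jv a b s) = p$b *\<^sub>R (0, axis a 1, 0) - p$a *\<^sub>R (0, axis b 1, 0)
      + (s$b *\<^sub>R (0, 0, axis a 1) - s$a *\<^sub>R (0, 0, axis b 1))"
      by (simp add: Jv_def)
    then show ?thesis by (simp only: L.add L.diff L.scale)
  qed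
  have gJ: "grad_s (Jcomp a b) z = cross3 (axis a 1) (axis b 1)"
  proof -
    have "(\<Sum>c\<in>UNIV. eps a b c * axis i 1 $ c) = eps a b i" for i
    proof -
      have "(\<lambda>c. eps a b c * axis i 1 $ c) = (\<lambda>c. if c = i then eps a b i else 0)" by (auto simp: axis_def)
      then show ?thesis by (simp only:) simp
    qed
    then show ?thesis by (simp add: grad_s_def fd_J vec_eq_iff eps_def eps_cyc)
  qed
  show ?thesis unfolding vec_eq_iff
  proof
    fix c
    let ?X = "\<lambda>d. A'z (0, axis d 1, 0) $ c"
    let ?g = "grad_s (\<lambda>w. A w $ c) z"
    have g: "?g $ d = A'z (0, 0, axis d 1) $ c" for d
      by (simp add: grad_s_def fd_comp[OF dA])
    have s1: "(\<Sum>d\<in>UNIV. dx (Jcomp a b) z d * dp (\<lambda>w. A w $ c) z d - dp (Jcomp a b) z d * dx (\<lambda>w. A w $ c) z d)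
        = p$b * ?X a - p$a * ?X b"
    proof -
      have "dx (\<lambda>w. A w $ c) z d = 0" for d using dx0 by (simp add: dx_def fd_comp[OF dA])
      moreover have "dx (Jcomp a b) z d = axis d 1 $ a * p$b - axis d 1 $ b * p$a" for d
        by (simp add: dx_def fd_J p_def)
      moreover have "dp (\<lambda>w. A w $ c) z d = ?X d" for d by (simp add: dp_def fd_comp[OF dA])
      ultimately show ?thesis by (simp add: sum_axis2)
    qed
    have s2: "spin z \<bullet> cross3 (grad_s (Jcomp a b) z) ?g = s$b * A'z (0, 0, axis a 1) $ c - s$a * A'z (0, 0, axis b 1) $ c"
      unfolding gJ triple_id by (simp add: inner_axis g s_def)
    have "pbr (Jcomp a b) (\<lambda>w. A w $ c) z = A'z (0, Jv a b p, Jv a b s) $ c"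
      unfolding pbr_def s1 s2 lin by simp
    moreover have "kdelta a c * A z $ b - kdelta b c * A z $ a = Jv a b (A z) $ c"
      by (simp add: kdelta_def Jv_def axis_def)
    ultimately show "A'z (0, Jv a b (mom z), Jv a b (spin z)) $ c = Jv a b (A z) $ c"
      using rc p_def s_def by simp
  qed
qed

definition rotz :: "3 \<Rightarrow> 3 \<Rightarrow> real \<Rightarrow> state \<Rightarrow> state" where
  "rotz a b t z = (fst z, rot a b t (fst (snd z)), rot a b t (snd (snd z)))"

lemma rotz_simps: "pos (rotz a b t z) = pos z" "mom (rotz a b t z) = rot a b t (mom z)"
  "spin (rotz a b t z) = rot a b t (spin z)"
  by (simp_all add: rotz_def pos_def mom_def spin_def)

lemma rotz_Gamma: "a \<noteq> b \<Longrightarrow> z \<in> Gamma S \<Longrightarrow> rotz a b t z \<in> Gamma S"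
  by (simp add: Gamma_def rotz_simps rot_norm)

lemma rot_hasderiv: "a \<noteq> b \<Longrightarrow> ((\<lambda>\<tau>. rot a b \<tau> v) has_derivative (\<lambda>h. h *\<^sub>R Jv a b (rot a b \<tau> v))) (at \<tau>)"
proof -
  assume ab: "a \<noteq> b"
  have "((\<lambda>\<tau>. rot a b \<tau> v) has_derivative (\<lambda>h. (h * - sin \<tau>) *\<^sub>R (v$a *\<^sub>R axis a 1 + v$b *\<^sub>R axis b 1) + (h * cos \<tau>) *\<^sub>R Jv a b v)) (at \<tau>)"
    unfolding rot_def by (auto intro!: derivative_eq_intros)
  moreover have "(\<lambda>h. (h * - sin \<tau>) *\<^sub>R (v$a *\<^sub>R axis a 1 + v$b *\<^sub>R axis b 1) + (h * cos \<tau>) *\<^sub>R Jv a b v)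
      = (\<lambda>h. h *\<^sub>R Jv a b (rot a b \<tau> v))"
    using ab by (auto simp: vec_eq_iff rot_nth Jv_nth axis_def algebra_simps)
  ultimately show ?thesis by simp
qed

lemma transl_inv:
  assumes dA: "\<forall>z\<in>U. (A has_derivative A' z) (at z)" and GU: "Gamma S \<subseteq> U"
    and dx0: "\<forall>z\<in>Gamma S. \<forall>v. A' z (v,0,0) = 0" and z: "(x,p,s) \<in> Gamma S"
  shows "A (x,p,s) = A (0,p,s)"
proof -
  have G: "(t *\<^sub>R x, p, s) \<in> Gamma S" for t using z by (simp add: Gamma_def spin_def)
  have d: "((\<lambda>t. A (t *\<^sub>R x, p, s)) has_derivative (\<lambda>h. 0)) (at t within UNIV)" for t
  proof -
    have d1: "((\<lambda>t. (t *\<^sub>R x, p, s)) has_derivative (\<lambda>h. (h *\<^sub>R x, 0, 0))) (at t)"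
      by (auto intro!: derivative_eq_intros simp: zero_prod_def)
    have d2: "(A has_derivative A' (t *\<^sub>R x, p, s)) (at (t *\<^sub>R x, p, s))" using dA GU G by blast
    have "((\<lambda>t. A (t *\<^sub>R x, p, s)) has_derivative (\<lambda>h. A' (t *\<^sub>R x, p, s) (h *\<^sub>R x, 0, 0))) (at t)"
      using diff_chain_at[OF d1 d2] by (simp add: o_def)
    moreover have "(\<lambda>h. A' (t *\<^sub>R x, p, s) (h *\<^sub>R x, 0, 0)) = (\<lambda>h. 0)"
      using dx0 G by auto
    ultimately show ?thesis by simp
  qed
  obtain c where "\<forall>t\<in>UNIV. A (t *\<^sub>R x, p, s) = c"
    using has_derivative_zero_constant[OF convex_UNIV d] by blast
  then have "A (1 *\<^sub>R x, p, s) = c" "A (0 *\<^sub>R x, p, s) = c" by blast+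
  then show ?thesis by simp
qed

lemma rot_inv_A:
  assumes dA: "\<forall>z\<in>U. (A has_derivative A' z) (at z)" and GU: "Gamma S \<subseteq> U"
    and key: "\<forall>z\<in>Gamma S. A' z (0, Jv a b (mom z), Jv a b (spin z)) = Jv a b (A z)"
    and ab: "a \<noteq> b" and z: "z \<in> Gamma S"
  shows "A (rotz a b t z) = rot a b t (A z)"
proof -
  have const: "rot a b t u \<bullet> A (rotz a b t z) = u \<bullet> A z" for u
  proof -
    let ?f = "\<lambda>\<tau>. rot a b \<tau> u \<bullet> A (rotz a b \<tau> z)"
    have d: "(?f has_derivative (\<lambda>h. 0)) (at \<tau> within UNIV)" for \<tau>
    proof -
      let ?w = "rotz a b \<tau> z"
      have wG: "?w \<in> Gamma S" using rotz_Gamma[OF ab z] .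
      have d1: "((\<lambda>\<tau>. rotz a b \<tau> z) has_derivative
          (\<lambda>h. h *\<^sub>R (0, Jv a b (mom ?w), Jv a b (spin ?w)))) (at \<tau>)"
        unfolding rotz_def mom_def spin_def
        by (auto intro!: derivative_eq_intros rot_hasderiv[OF ab])
      have d2: "(A has_derivative A' ?w) (at ?w)" using dA GU wG by blast
      have bl: "bounded_linear (A' ?w)" using d2 by (rule has_derivative_bounded_linear)
      have d3: "((\<lambda>\<tau>. A (rotz a b \<tau> z)) has_derivative (\<lambda>h. h *\<^sub>R Jv a b (A ?w))) (at \<tau>)"
      proof -
        have "((\<lambda>\<tau>. A (rotz a b \<tau> z)) has_derivative (\<lambda>h. A' ?w (h *\<^sub>R (0, Jv a b (mom ?w), Jv a b (spin ?w))))) (at \<tau>)"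
          using diff_chain_at[OF d1 d2] by (simp add: o_def)
        moreover have "(\<lambda>h. A' ?w (h *\<^sub>R (0, Jv a b (mom ?w), Jv a b (spin ?w)))) = (\<lambda>h. h *\<^sub>R Jv a b (A ?w))"
          by (rule ext, simp only: linear_scale[OF bounded_linear.linear[OF bl]] key[rule_format, OF wG])
        ultimately show ?thesis by simp
      qed
      have "(?f has_derivative (\<lambda>h. rot a b \<tau> u \<bullet> (h *\<^sub>R Jv a b (A ?w)) + (h *\<^sub>R Jv a b (rot a b \<tau> u)) \<bullet> A ?w)) (at \<tau>)"
        by (rule has_derivative_inner[OF rot_hasderiv[OF ab] d3])
      moreover have "(\<lambda>h. rot a b \<tau> u \<bullet> (h *\<^sub>R Jv a b (A ?w)) + (h *\<^sub>R Jv a b (rot a b \<tau> u)) \<bullet> A ?w) = (\<lambda>h. 0)"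
      proof
        fix h
        have "Jv a b (rot a b \<tau> u) \<bullet> A ?w + rot a b \<tau> u \<bullet> Jv a b (A ?w) = 0" by (rule Jv_antisym[OF ab])
        then show "rot a b \<tau> u \<bullet> (h *\<^sub>R Jv a b (A ?w)) + (h *\<^sub>R Jv a b (rot a b \<tau> u)) \<bullet> A ?w = 0"
          by (simp add: algebra_simps) (metis distrib_left mult_zero_right)
      qed
      ultimately show ?thesis by simp
    qed
    obtain c where "\<forall>\<tau>\<in>UNIV. ?f \<tau> = c"
      using has_derivative_zero_constant[OF convex_UNIV d] by blast
    then have "?f t = c" "?f 0 = c" by blast+
    then have "?f t = ?f 0" by simp
    moreover have "rotz a b 0 z = z" by (simp add: rotz_def)
    ultimately show ?thesis by simp
  qed
  have "x \<bullet> A (rotz a b t z) = x \<bullet> rot a b t (A z)" for x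
  proof -
    have "x \<bullet> A (rotz a b t z) = rot a b t (rot a b (-t) x) \<bullet> A (rotz a b t z)" by (simp add: rot_inv[OF ab])
    also have "\<dots> = rot a b (-t) x \<bullet> A z" by (rule const)
    also have "\<dots> = rot a b t (rot a b (-t) x) \<bullet> rot a b t (A z)" by (simp add: rot_inner[OF ab])
    also have "\<dots> = x \<bullet> rot a b t (A z)" by (simp add: rot_inv[OF ab])
    finally show ?thesis .
  qed
  then show ?thesis using vector_eq_ldot by blast
qed

definition good :: "(state \<Rightarrow> real^3) \<Rightarrow> (real \<times> real \<Rightarrow> real) \<Rightarrow> (real \<times> real \<Rightarrow> real) \<Rightarrow> state \<Rightarrow> bool" where
  "good A B C z \<longleftrightarrow> (let Ph = mom z /\<^sub>R norm (mom z); s = spin z;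
                   arg = (norm (mom z), Ph \<bullet> s)
               in A z = B arg *\<^sub>R cross3 Ph s + C arg *\<^sub>R cross3 Ph (cross3 Ph s))"

lemma rot_inv': "a \<noteq> b \<Longrightarrow> rot a b (-t) (rot a b t w) = w"
  using rot_inv[of a b "-t" w] by simp

lemma transport:
  assumes ab: "a \<noteq> b" and rc: "\<And>u v. cross3 (rot a b t u) (rot a b t v) = rot a b t (cross3 u v)"
    and hA: "A (rotz a b t z) = rot a b t (A z)" and g: "good A B C (rotz a b t z)"
  shows "good A B C z"
proof -
  let ?R = "rot a b t"
  define p where "p = mom z"
  define s where "s = spin z"
  define Ph where "Ph = p /\<^sub>R norm p"
  have m: "mom (rotz a b t z) = ?R p" "spin (rotz a b t z) = ?R s" by (simp_all add: rotz_simps p_def s_def)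
  have n: "norm (?R p) = norm p" by (rule rot_norm[OF ab])
  have ph: "?R p /\<^sub>R norm (?R p) = ?R Ph" by (simp add: n Ph_def rot_scaleR[OF ab])
  have i: "?R Ph \<bullet> ?R s = Ph \<bullet> s" by (rule rot_inner[OF ab])
  have g1: "A (rotz a b t z) = B (norm (?R p), ?R Ph \<bullet> ?R s) *\<^sub>R cross3 (?R Ph) (?R s) + C (norm (?R p), ?R Ph \<bullet> ?R s) *\<^sub>R cross3 (?R Ph) (cross3 (?R Ph) (?R s))"
    using g unfolding good_def Let_def m ph .
  have "?R (A z) = B (norm p, Ph \<bullet> s) *\<^sub>R ?R (cross3 Ph s) + C (norm p, Ph \<bullet> s) *\<^sub>R ?R (cross3 Ph (cross3 Ph s))"
    using g1 hA unfolding n i rc by simp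
  also have "\<dots> = ?R (B (norm p, Ph \<bullet> s) *\<^sub>R cross3 Ph s + C (norm p, Ph \<bullet> s) *\<^sub>R cross3 Ph (cross3 Ph s))"
    by (simp add: rot_add[OF ab] rot_scaleR[OF ab])
  finally have "rot a b (-t) (?R (A z)) = rot a b (-t) (?R (B (norm p, Ph \<bullet> s) *\<^sub>R cross3 Ph s + C (norm p, Ph \<bullet> s) *\<^sub>R cross3 Ph (cross3 Ph s)))"
    by simp
  then show ?thesis unfolding good_def Let_def rot_inv'[OF ab] p_def[symmetric] s_def[symmetric] Ph_def[symmetric] .
qed

lemma par_transport:
  assumes ab: "a \<noteq> b" and "spin_parallel (rotz a b t z)"
  shows "spin_parallel z"
proof -
  obtain \<tau> where "rot a b t (spin z) = \<tau> *\<^sub>R (rot a b t (mom z) /\<^sub>R norm (rot a b t (mom z)))"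
    using assms(2) by (auto simp: spin_parallel_def rotz_simps)
  then have "rot a b t (spin z) = rot a b t (\<tau> *\<^sub>R (mom z /\<^sub>R norm (mom z)))"
    by (simp add: rot_norm[OF ab] rot_scaleR[OF ab])
  then have "rot a b (-t) (rot a b t (spin z)) = rot a b (-t) (rot a b t (\<tau> *\<^sub>R (mom z /\<^sub>R norm (mom z))))"
    by simp
  then show ?thesis unfolding rot_inv'[OF ab] spin_parallel_def by blast
qed

lemma angle1:
  assumes ab: "a \<noteq> b"
  shows "\<exists>t. rot a b t v $ a = 0 \<and> rot a b t v $ b = sqrt ((v$a)\<^sup>2 + (v$b)\<^sup>2)"
proof (cases "sqrt ((v$a)\<^sup>2 + (v$b)\<^sup>2) = 0")
  case True
  then have "v$a = 0" "v$b = 0" by (simp_all add: sum_power2_eq_zero_iff)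
  then show ?thesis using True by (intro exI[of _ 0]) simp
next
  case False
  define \<rho> where "\<rho> = sqrt ((v$a)\<^sup>2 + (v$b)\<^sup>2)"
  have r2: "\<rho>\<^sup>2 = (v$a)\<^sup>2 + (v$b)\<^sup>2" unfolding \<rho>_def by simp
  have r0: "\<rho> \<noteq> 0" using False \<rho>_def by simp
  have "(v$b / \<rho>)\<^sup>2 + (- v$a / \<rho>)\<^sup>2 = 1"
  proof -
    have "\<rho>\<^sup>2 \<noteq> 0" using r0 by simp
    then show ?thesis unfolding power_divide by (simp add: r2 add_divide_distrib[symmetric] add.commute)
  qed
  then obtain t where t: "v$b / \<rho> = cos t" "- v$a / \<rho> = sin t" by (rule sincos_total_2pi)
  have "rot a b t v $ a = 0" using ab t r0 by (simp add: rot_nth flip: t)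
  moreover have "rot a b t v $ b = \<rho>" using ab t r0 r2 by (simp add: rot_nth flip: t) (simp add: field_simps power2_eq_square)
  ultimately show ?thesis unfolding \<rho>_def by blast
qed

lemma angle2:
  assumes ab: "a \<noteq> b"
  shows "\<exists>t. rot a b t v $ b = 0 \<and> rot a b t v $ a = sqrt ((v$a)\<^sup>2 + (v$b)\<^sup>2)"
proof (cases "sqrt ((v$a)\<^sup>2 + (v$b)\<^sup>2) = 0")
  case True
  then have "v$a = 0" "v$b = 0" by (simp_all add: sum_power2_eq_zero_iff)
  then show ?thesis using True by (intro exI[of _ 0]) simp
next
  case False
  define \<rho> where "\<rho> = sqrt ((v$a)\<^sup>2 + (v$b)\<^sup>2)"
  have r2: "\<rho>\<^sup>2 = (v$a)\<^sup>2 + (v$b)\<^sup>2" unfolding \<rho>_def by simp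
  have r0: "\<rho> \<noteq> 0" using False \<rho>_def by simp
  have "(v$a / \<rho>)\<^sup>2 + (v$b / \<rho>)\<^sup>2 = 1"
  proof -
    have "\<rho>\<^sup>2 \<noteq> 0" using r0 by simp
    then show ?thesis unfolding power_divide by (simp add: r2 add_divide_distrib[symmetric] add.commute)
  qed
  then obtain t where t: "v$a / \<rho> = cos t" "v$b / \<rho> = sin t" by (rule sincos_total_2pi)
  have "rot a b t v $ b = 0" using ab t r0 by (simp add: rot_nth flip: t)
  moreover have "rot a b t v $ a = \<rho>" using ab t r0 r2 by (simp add: rot_nth flip: t) (simp add: field_simps power2_eq_square)
  ultimately show ?thesis unfolding \<rho>_def by blast
qed

definition sig :: "real \<Rightarrow> real \<Rightarrow> real" where "sig S u = sqrt (S\<^sup>2 - u\<^sup>2)"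
definition gmap :: "real \<Rightarrow> real \<times> real \<Rightarrow> state" where
  "gmap S w = (0, vector [0, 0, fst w], vector [sig S (snd w), 0, snd w])"

lemma norm_vec3: "norm (vector [x, y, z] :: real^3) = sqrt (x\<^sup>2 + y\<^sup>2 + z\<^sup>2)"
  by (simp add: norm_eq_sqrt_inner inner_vec_def sum_3 power2_eq_square)

lemma sq_lt: "\<bar>u\<bar> < S \<Longrightarrow> u\<^sup>2 < (S::real)\<^sup>2"
proof -
  assume h: "\<bar>u\<bar> < S"
  have "\<bar>u\<bar>\<^sup>2 < S\<^sup>2" by (rule power_strict_mono[OF h]) auto
  then show ?thesis by simp
qed

lemma sig_pos: "\<bar>u\<bar> < S \<Longrightarrow> sig S u > 0"
proof -
  assume "\<bar>u\<bar> < S"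
  then have "u\<^sup>2 < S\<^sup>2" by (rule sq_lt)
  then show ?thesis unfolding sig_def by simp
qed

lemma sig_sq: "\<bar>u\<bar> < S \<Longrightarrow> (sig S u)\<^sup>2 = S\<^sup>2 - u\<^sup>2"
proof -
  assume "\<bar>u\<bar> < S"
  then have "u\<^sup>2 < S\<^sup>2" by (rule sq_lt)
  then show ?thesis unfolding sig_def by simp
qed

lemma gmap_Gamma: "w \<in> {0<..} \<times> {-S<..<S} \<Longrightarrow> gmap S w \<in> Gamma S"
proof -
  assume w: "w \<in> {0<..} \<times> {-S<..<S}"
  then have u: "\<bar>snd w\<bar> < S" by auto
  have e: "(sig S (snd w))\<^sup>2 + 0\<^sup>2 + (snd w)\<^sup>2 = S\<^sup>2" using sig_sq[OF u] by simp
  have S: "S > 0" using u by linarith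
  have "norm (spin (gmap S w)) = sqrt ((sig S (snd w))\<^sup>2 + 0\<^sup>2 + (snd w)\<^sup>2)"
    unfolding gmap_def spin_def snd_conv by (rule norm_vec3)
  also have "\<dots> = S" unfolding e using S by simp
  finally show ?thesis unfolding Gamma_def by simp
qed


lemma bl_L: "bounded_linear (\<lambda>(r::real, u::real, q::real). (0::real^3, vector [0, 0, r] :: real^3, vector [q, 0, u] :: real^3))"
proof -
  have "linear (\<lambda>(r::real, u::real, q::real). (0::real^3, vector [0, 0, r] :: real^3, vector [q, 0, u] :: real^3))"
    by (rule linearI) (auto simp: vec_eq_iff forall_3 vector_3)
  then show ?thesis by (simp add: linear_conv_bounded_linear)
qed

lemma C1_sig: "C1_on {-S<..<S} (sig S)"
proof (rule C1_real)
  show "\<forall>x\<in>{-S<..<S}. (sig S has_real_derivative (- x / sig S x)) (at x)"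
  proof
    fix x assume x: "x \<in> {-S<..<S}"
    then have p: "sig S x > 0" by (intro sig_pos) auto
    then have "S\<^sup>2 - x\<^sup>2 > 0" unfolding sig_def by simp
    then show "(sig S has_real_derivative (- x / sig S x)) (at x)"
    proof -
      have d1: "((\<lambda>x. S\<^sup>2 - x\<^sup>2) has_real_derivative (- (2 * x))) (at x)"
        by (auto intro!: derivative_eq_intros)
      have d2: "(sqrt has_real_derivative inverse (sqrt (S\<^sup>2 - x\<^sup>2)) / 2) (at (S\<^sup>2 - x\<^sup>2))"
        by (rule DERIV_real_sqrt) fact
      have "((\<lambda>x. sqrt (S\<^sup>2 - x\<^sup>2)) has_real_derivative inverse (sqrt (S\<^sup>2 - x\<^sup>2)) / 2 * (- (2 * x))) (at x)"
        by (rule DERIV_chain2[OF d2 d1])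
      moreover have "inverse (sqrt (S\<^sup>2 - x\<^sup>2)) / 2 * (- (2 * x)) = - x / sig S x"
        unfolding sig_def by (simp add: field_simps)
      ultimately show ?thesis unfolding sig_def by simp
    qed
  qed
  show "continuous_on {-S<..<S} (\<lambda>x. - x / sig S x)"
    unfolding sig_def
  proof (intro continuous_intros ballI)
    fix x assume "x \<in> {-S<..<S}"
    then have "sig S x > 0" by (intro sig_pos) auto
    then show "sqrt (S\<^sup>2 - x\<^sup>2) \<noteq> 0" unfolding sig_def by simp
  qed
qed

lemma C1_inv: "C1_on {0<..} (\<lambda>x::real. inverse x)"
proof (rule C1_real)
  show "\<forall>x\<in>{0<..}. ((\<lambda>x::real. inverse x) has_real_derivative (- (inverse x ^ 2))) (at x)"
  proof
    fix x :: real assume "x \<in> {0<..}"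
    then have "x \<noteq> 0" by simp
    from DERIV_inverse[OF this, of UNIV] show "((\<lambda>x::real. inverse x) has_real_derivative (- (inverse x ^ 2))) (at x)"
      by (simp add: eval_nat_numeral)
  qed
  show "continuous_on {0<..} (\<lambda>x::real. - (inverse x ^ 2))"
    by (auto intro!: continuous_intros)
qed

lemma C1_gmap: "C1_on ({0<..} \<times> {-S<..<S}) (gmap S)"
proof -
  let ?V = "{0<..} \<times> {-S<..<S} :: (real \<times> real) set"
  have sn: "C1_on ?V (\<lambda>w. sig S (snd w))"
    by (rule C1_comp[OF C1_sig C1_lin]) (auto intro: bounded_linear_snd)
  have "C1_on ?V (\<lambda>w. (fst w, snd w, sig S (snd w)))"
    by (intro C1_pair sn C1_lin bounded_linear_fst bounded_linear_snd)
  from C1_comp[OF C1_lin[OF bl_L] this, of UNIV]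
  show ?thesis by (simp add: gmap_def[abs_def])
qed

lemma C1_k: "C1_on ({0<..} \<times> {-S<..<S}) (\<lambda>w. inverse (sig S (snd w)))"
proof -
  have sn: "C1_on ({0<..} \<times> {-S<..<S}) (\<lambda>w. sig S (snd w))"
    by (rule C1_comp[OF C1_sig C1_lin]) (auto intro: bounded_linear_snd)
  show ?thesis
    by (rule C1_comp[OF C1_inv sn]) (auto intro!: sig_pos)
qed

lemma C1_coef:
  assumes A: "C1_on U A" and GU: "Gamma S \<subseteq> U" and L: "bounded_linear (l :: real^3 \<Rightarrow> real)"
  shows "C1_on ({0<..} \<times> {-S<..<S}) (\<lambda>w. l (A (gmap S w)) * inverse (sig S (snd w)))"
proof -
  let ?V = "{0<..} \<times> {-S<..<S} :: (real \<times> real) set"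
  have "C1_on ?V (\<lambda>w. A (gmap S w))"
    by (rule C1_comp[OF A C1_gmap]) (use GU gmap_Gamma in blast)
  then have "C1_on ?V (\<lambda>w. l (A (gmap S w)))"
    by (rule C1_comp[OF C1_lin[OF L, of UNIV]]) simp
  then have "C1_on ?V (\<lambda>w. (l (A (gmap S w)), inverse (sig S (snd w))))"
    by (rule C1_pair[OF _ C1_k])
  from C1_comp[OF C1_mult this] show ?thesis by simp
qed


lemma canonical:
  assumes S: "S > 0" and G: "z \<in> Gamma S"
    and m1: "mom z $ 1 = 0" and m2: "mom z $ 2 = 0" and m3: "mom z $ 3 \<ge> 0" and mz: "mom z \<noteq> 0"
    and s2: "spin z $ 2 = 0" and s1: "spin z $ 1 \<ge> 0" and np: "\<not> spin_parallel z"
    and orth: "A z \<bullet> mom z = 0"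
    and Ag: "A z = A (0, mom z, spin z)"
  shows "good A (\<lambda>w. A (gmap S w) $ 2 * inverse (sig S (snd w)))
                 (\<lambda>w. (- (A (gmap S w) $ 1)) * inverse (sig S (snd w))) z"
proof -
  define r where "r = mom z $ 3"
  define u where "u = spin z $ 3"
  define \<sigma> where "\<sigma> = spin z $ 1"
  have p3: "mom z = vector [0, 0, r]" using m1 m2 unfolding r_def by (simp add: vec_eq_iff forall_3 vector_3)
  have sp3: "spin z = vector [\<sigma>, 0, u]" using s2 unfolding u_def \<sigma>_def by (simp add: vec_eq_iff forall_3 vector_3)
  have r0: "r \<noteq> 0" using mz p3 by (auto simp: vec_eq_iff forall_3 vector_3)
  have rp: "r > 0" using r0 m3 r_def by simp
  have nr: "norm (mom z) = r" unfolding p3 norm_vec3 using rp by simp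
  have Ph: "mom z /\<^sub>R norm (mom z) = vector [0, 0, 1]"
    unfolding nr unfolding p3 using r0 by (simp add: vec_eq_iff forall_3 vector_3)
  have ip: "vector [0, 0, 1] \<bullet> spin z = u" unfolding sp3 by (simp add: inner_vec_def sum_3 vector_3)
  have "norm (vector [\<sigma>, 0, u] :: real^3) = S" using G sp3 unfolding Gamma_def by simp
  then have "sqrt (\<sigma>\<^sup>2 + 0\<^sup>2 + u\<^sup>2) = S" unfolding norm_vec3 .
  then have "(sqrt (\<sigma>\<^sup>2 + u\<^sup>2))\<^sup>2 = S\<^sup>2" by simp
  then have ss: "\<sigma>\<^sup>2 + u\<^sup>2 = S\<^sup>2" by simp
  have sg0: "\<sigma> \<noteq> 0"
  proof
    assume "\<sigma> = 0"
    then have "spin z = u *\<^sub>R (mom z /\<^sub>R norm (mom z))" unfolding Ph sp3 by (simp add: vec_eq_iff forall_3 vector_3)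
    then show False using np unfolding spin_parallel_def by blast
  qed
  have sgp: "\<sigma> > 0" using sg0 s1 \<sigma>_def by simp
  have sig: "sig S u = \<sigma>"
  proof -
    have "S\<^sup>2 - u\<^sup>2 = \<sigma>\<^sup>2" using ss by simp
    then show ?thesis unfolding sig_def using sgp by simp
  qed
  have A3: "A z $ 3 = 0"
  proof -
    have "A z \<bullet> mom z = A z $ 3 * r" unfolding p3 by (simp add: inner_vec_def sum_3 vector_3)
    then show ?thesis using orth r0 by simp
  qed
  have "gmap S (r, u) = (0, mom z, spin z)" unfolding gmap_def fst_conv snd_conv sig p3 sp3 ..
  then have Ag': "A (gmap S (r, u)) = A z" using Ag by simp
  show ?thesis
    unfolding good_def Let_def Ph
    unfolding ip nr
    unfolding sp3 snd_conv Ag' sig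
    using A3 sg0 by (simp add: vec_eq_iff forall_3 vector_3 cross3_def)
qed

theorem mainTheorem11:
  fixes S :: real and A :: "state \<Rightarrow> real^3"
  assumes S_pos: "S > 0"
    and A_C1: "C1_on_Gamma S A"
    and transl: "\<forall>z\<in>Gamma S. \<forall>a b. pbr (Pcomp a) (\<lambda>w. A w $ b) z = 0"
    and rot: "\<forall>z\<in>Gamma S. \<forall>a b c.
               pbr (Jcomp a b) (\<lambda>w. A w $ c) z = kdelta a c * A z $ b - kdelta b c * A z $ a"
    and orth: "\<forall>z\<in>Gamma S. A z \<bullet> mom z = 0"
  shows "\<exists>B C :: real \<times> real \<Rightarrow> real.
           C1_on ({0<..} \<times> {-S<..<S}) B \<and> C1_on ({0<..} \<times> {-S<..<S}) C \<and>
           (\<forall>z\<in>Gamma S. mom z \<noteq> 0 \<longrightarrow> \<not> spin_parallel z \<longrightarrow>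
              (let Ph = mom z /\<^sub>R norm (mom z); s = spin z;
                   arg = (norm (mom z), Ph \<bullet> s)
               in A z = B arg *\<^sub>R cross3 Ph s + C arg *\<^sub>R cross3 Ph (cross3 Ph s)))"
proof -
  obtain U where U: "open U" "Gamma S \<subseteq> U" "C1_on U A" using A_C1 unfolding C1_on_Gamma_def by blast
  obtain A' where dA: "\<forall>z\<in>U. (A has_derivative A' z) (at z)" using U(3) unfolding C1_on_def by blast
  have dx0: "\<forall>z\<in>Gamma S. \<forall>v. A' z (v,0,0) = 0"
    using trans_deriv0 dA U(2) transl by blast
  have key: "\<forall>z\<in>Gamma S. A' z (0, Jv a b (mom z), Jv a b (spin z)) = Jv a b (A z)" for a b
  proof
    fix z assume z: "z \<in> Gamma S"
    show "A' z (0, Jv a b (mom z), Jv a b (spin z)) = Jv a b (A z)"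
      by (rule rot_deriv_key) (use z dA U(2) dx0 rot in blast)+
  qed
  have Arot: "A (rotz a b t z) = rot a b t (A z)" if "a \<noteq> b" "z \<in> Gamma S" for a b t z
    by (rule rot_inv_A[OF dA U(2) key that])
  define B where "B = (\<lambda>w. A (gmap S w) $ 2 * inverse (sig S (snd w)))"
  define C where "C = (\<lambda>w. (- (A (gmap S w) $ 1)) * inverse (sig S (snd w)))"
  have C1B: "C1_on ({0<..} \<times> {-S<..<S}) B"
    unfolding B_def by (rule C1_coef[OF U(3) U(2) bounded_linear_vec_nth])
  have C1C: "C1_on ({0<..} \<times> {-S<..<S}) C"
    unfolding C_def by (rule C1_coef[OF U(3) U(2) bounded_linear_minus[OF bounded_linear_vec_nth]])
  have d12: "(1::3) \<noteq> 2" and d23: "(2::3) \<noteq> 3" and d13: "(1::3) \<noteq> 3" by simp_all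
  have pt: "good A B C z" if zG: "z \<in> Gamma S" and mz: "mom z \<noteq> 0" and np: "\<not> spin_parallel z" for z
  proof -
    obtain t1 where t1: "rot 1 2 t1 (mom z) $ 1 = 0" "rot 1 2 t1 (mom z) $ 2 = sqrt ((mom z $ 1)\<^sup>2 + (mom z $ 2)\<^sup>2)"
      using angle1[OF d12] by blast
    define z1 where "z1 = rotz 1 2 t1 z"
    obtain t2 where t2: "rot 2 3 t2 (mom z1) $ 2 = 0" "rot 2 3 t2 (mom z1) $ 3 = sqrt ((mom z1 $ 2)\<^sup>2 + (mom z1 $ 3)\<^sup>2)"
      using angle1[OF d23] by blast
    define z2 where "z2 = rotz 2 3 t2 z1"
    obtain t3 where t3: "rot 1 2 t3 (spin z2) $ 2 = 0" "rot 1 2 t3 (spin z2) $ 1 = sqrt ((spin z2 $ 1)\<^sup>2 + (spin z2 $ 2)\<^sup>2)"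
      using angle2[OF d12] by blast
    define z3 where "z3 = rotz 1 2 t3 z2"
    have G1: "z1 \<in> Gamma S" unfolding z1_def by (rule rotz_Gamma[OF d12 zG])
    have G2: "z2 \<in> Gamma S" unfolding z2_def by (rule rotz_Gamma[OF d23 G1])
    have G3: "z3 \<in> Gamma S" unfolding z3_def by (rule rotz_Gamma[OF d12 G2])
    have n1: "\<not> spin_parallel z1" using np par_transport[OF d12] unfolding z1_def by blast
    have n2: "\<not> spin_parallel z2" using n1 par_transport[OF d23] unfolding z2_def by blast
    have n3: "\<not> spin_parallel z3" using n2 par_transport[OF d12] unfolding z3_def by blast
    have m1: "mom z1 \<noteq> 0" using mz unfolding z1_def rotz_simps by (metis norm_eq_zero rot_norm[OF d12])
    have m2: "mom z2 \<noteq> 0" using m1 unfolding z2_def rotz_simps by (metis norm_eq_zero rot_norm[OF d23])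
    have m3: "mom z3 \<noteq> 0" using m2 unfolding z3_def rotz_simps by (metis norm_eq_zero rot_norm[OF d12])
    have z1m: "mom z1 $ 1 = 0" using t1 unfolding z1_def rotz_simps by simp
    have z2m1: "mom z2 $ 1 = 0" using z1m d23 d13 unfolding z2_def rotz_simps by (simp add: rot_nth[OF d23])
    have z2m2: "mom z2 $ 2 = 0" using t2 unfolding z2_def rotz_simps by simp
    have z2m3: "mom z2 $ 3 \<ge> 0" using t2 unfolding z2_def rotz_simps by simp
    have z3m: "mom z3 = mom z2"
      unfolding z3_def rotz_simps using z2m1 z2m2 by (simp add: vec_eq_iff forall_3 rot_nth[OF d12])
    have z3s2: "spin z3 $ 2 = 0" using t3 unfolding z3_def rotz_simps by simp
    have z3s1: "spin z3 $ 1 \<ge> 0" using t3 unfolding z3_def rotz_simps by simp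
    have trz3: "A z3 = A (0, mom z3, spin z3)"
    proof -
      have e: "z3 = (pos z3, mom z3, spin z3)" by (simp add: pos_def mom_def spin_def)
      have "(pos z3, mom z3, spin z3) \<in> Gamma S" using G3 e by simp
      from transl_inv[OF dA U(2) dx0 this] e show ?thesis by simp
    qed
    have g3: "good A B C z3"
    proof -
      have a1: "mom z3 $ 1 = 0" using z3m z2m1 by simp
      have a2: "mom z3 $ 2 = 0" using z3m z2m2 by simp
      have a3: "mom z3 $ 3 \<ge> 0" using z3m z2m3 by simp
      show ?thesis unfolding B_def C_def
        by (rule canonical[OF S_pos G3 a1 a2 a3 m3 z3s2 z3s1 n3 orth[rule_format, OF G3] trz3])
    qed
    have g2: "good A B C z2"
      by (rule transport[OF d12 rot_cross12 Arot[OF d12 G2]]) (use g3 z3_def in simp)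
    have g1: "good A B C z1"
      by (rule transport[OF d23 rot_cross23 Arot[OF d23 G1]]) (use g2 z2_def in simp)
    show "good A B C z"
      by (rule transport[OF d12 rot_cross12 Arot[OF d12 zG]]) (use g1 z1_def in simp)
  qed
  show ?thesis
  proof -
    have "\<forall>z\<in>Gamma S. mom z \<noteq> 0 \<longrightarrow> \<not> spin_parallel z \<longrightarrow> good A B C z" using pt by blast
    then show ?thesis using C1B C1C unfolding good_def by blast
  qed
qed

end
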